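(* Let $x\ne y$ be nodes in an ADMG $G$. There exist a node $z$ and a set $W$ such that $(\{z\},W)$ is a valid conditional instrumental set relative to $(x,y)$ in $G$ if and only if there exist a node $z'$ and a set $W'\subseteq\mathrm{an}_{\tilde G}(\{y,z'\})$ such that $(\{z'\},W')$ is a valid conditional instrumental set relative to $(x,y)$ in $G$.
   Context: An ADMG $G$ has a finite node set $V$, directed edges $u\to v$ and bidirected edges $u\leftrightarrow v$, with no directed cycle. A walk is a sequence of nodes $v_1,\dots,v_r$ with edges $e_i$ joining $v_i$ and $v_{i+1}$ (nodes may repeat). $\mathrm{de}_G(v)$ ($\mathrm{an}_G(v)$) is the set of nodes reachable from $v$ by a directed path (from which $v$ is reachable by a directed path), including $v$; for sets take unions. A non-endpoint occurrence on a walk is a collider if both incident walk edges have an arrowhead at it, otherwise a non-collider. A walk is open given $W$ if every collider is in $W$ and every non-collider is not in $W$. For disjoint $A,B,W$, $A\not\perp_G B\mid W$ if some walk from $A$ to $B$ is open given $W$, otherwise $A\perp_G B\mid W$. $\mathrm{causal}_G(x,y)=(\mathrm{de}_G(x)\cap\mathrm{an}_G(y))\setminus\{x\}$, $\mathrm{forb}_G(x,y)=\mathrm{de}_G(\mathrm{causal}_G(x,y))\cup\{x\}$, and $\tilde G$ is $G$ with all directed edges $x\to c$, $c\in\mathrm{causal}_G(x,y)$, removed. For pairwise disjoint $\{x,y\},Z,W$, $(Z,W)$ is a valid conditional instrumental set relative to $(x,y)$ in $G$ iff (a) $(Z\cup W)\cap\mathrm{forb}_G(x,y)=\emptyset$,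 (b) $x\not\perp_G Z\mid W$, and (c) $y\perp_{\tilde G} Z\mid W$. *)

theory Defs
  imports Main
begin

text \<open>An ADMG: finite node set, directed edges (a,b) meaning a \<rightarrow> b,
  bidirected edges (a,b) meaning a \<leftrightarrow> b (orientation of the pair irrelevant).\<close>
record 'v admg =
  nodes :: "'v set"
  dir :: "('v \<times> 'v) set"
  bi :: "('v \<times> 'v) set"

definition is_admg :: "'v admg \<Rightarrow> bool" where
  "is_admg G \<longleftrightarrow> finite (nodes G) \<and> dir G \<subseteq> nodes G \<times> nodes G
     \<and> bi G \<subseteq> nodes G \<times> nodes G \<and> irrefl (bi G) \<and> acyclic (dir G)"

text \<open>Kind of the i-th walk edge, read from v_i to v_(i+1):
  Fwd: v_i \<rightarrow> v_(i+1); Bwd: v_i \<leftarrow> v_(i+1); Bid: v_i \<leftrightarrow> v_(i+1).\<close>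
datatype ekind = Fwd | Bwd | Bid

definition step_ok :: "'v admg \<Rightarrow> 'v \<Rightarrow> ekind \<Rightarrow> 'v \<Rightarrow> bool" where
  "step_ok G a k b \<longleftrightarrow>
     (case k of Fwd \<Rightarrow> (a, b) \<in> dir G
              | Bwd \<Rightarrow> (b, a) \<in> dir G
              | Bid \<Rightarrow> (a, b) \<in> bi G \<or> (b, a) \<in> bi G)"

definition is_walk :: "'v admg \<Rightarrow> 'v list \<Rightarrow> ekind list \<Rightarrow> bool" where
  "is_walk G vs ks \<longleftrightarrow> length vs = Suc (length ks) \<and> set vs \<subseteq> nodes G
     \<and> (\<forall>i < length ks. step_ok G (vs ! i) (ks ! i) (vs ! Suc i))"

text \<open>Arrowhead at the head of an edge (at v_(i+1)) resp. at its tail (at v_i).\<close>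
definition arrow_at_end :: "ekind \<Rightarrow> bool" where
  "arrow_at_end k \<longleftrightarrow> k = Fwd \<or> k = Bid"
definition arrow_at_start :: "ekind \<Rightarrow> bool" where
  "arrow_at_start k \<longleftrightarrow> k = Bwd \<or> k = Bid"

text \<open>Non-endpoint occurrence i (0 < i < length ks) is a collider.\<close>
definition collider :: "ekind list \<Rightarrow> nat \<Rightarrow> bool" where
  "collider ks i \<longleftrightarrow> arrow_at_end (ks ! (i - 1)) \<and> arrow_at_start (ks ! i)"

definition open_walk :: "'v list \<Rightarrow> ekind list \<Rightarrow> 'v set \<Rightarrow> bool" where
  "open_walk vs ks W \<longleftrightarrow>
     (\<forall>i. 0 < i \<and> i < length ks \<longrightarrow>
        (if collider ks i then vs ! i \<in> W else vs ! i \<notin> W))"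

definition d_connected :: "'v admg \<Rightarrow> 'v set \<Rightarrow> 'v set \<Rightarrow> 'v set \<Rightarrow> bool" where
  "d_connected G A B W \<longleftrightarrow>
     (\<exists>vs ks. is_walk G vs ks \<and> hd vs \<in> A \<and> last vs \<in> B \<and> open_walk vs ks W)"

definition d_separated :: "'v admg \<Rightarrow> 'v set \<Rightarrow> 'v set \<Rightarrow> 'v set \<Rightarrow> bool" where
  "d_separated G A B W \<longleftrightarrow> \<not> d_connected G A B W"

definition de :: "'v admg \<Rightarrow> 'v set \<Rightarrow> 'v set" where
  "de G S = {w. \<exists>v\<in>S. (v, w) \<in> (dir G)\<^sup>*}"

definition an :: "'v admg \<Rightarrow> 'v set \<Rightarrow> 'v set" where
  "an G S = {w. \<exists>v\<in>S. (w, v) \<in> (dir G)\<^sup>*}"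

definition causal :: "'v admg \<Rightarrow> 'v \<Rightarrow> 'v \<Rightarrow> 'v set" where
  "causal G x y = (de G {x} \<inter> an G {y}) - {x}"

definition forb :: "'v admg \<Rightarrow> 'v \<Rightarrow> 'v \<Rightarrow> 'v set" where
  "forb G x y = de G (causal G x y) \<union> {x}"

definition tilde :: "'v admg \<Rightarrow> 'v \<Rightarrow> 'v \<Rightarrow> 'v admg" where
  "tilde G x y = G\<lparr>dir := dir G - {(x, c) | c. c \<in> causal G x y}\<rparr>"

text \<open>Valid conditional instrumental set; the standing requirement that
  {x,y}, Z, W are pairwise disjoint is included.\<close>
definition valid_cis :: "'v admg \<Rightarrow> 'v \<Rightarrow> 'v \<Rightarrow> 'v set \<Rightarrow> 'v set \<Rightarrow> bool" where
  "valid_cis G x y Z W \<longleftrightarrow>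
     {x, y} \<inter> Z = {} \<and> {x, y} \<inter> W = {} \<and> Z \<inter> W = {}
     \<and> (Z \<union> W) \<inter> forb G x y = {}
     \<and> d_connected G {x} Z W
     \<and> d_separated (tilde G x y) {y} Z W"

end

theory Submission imports Defs begin

lemma walk_step:
  assumes "is_walk H vs ks" "i < length ks"
  shows "step_ok H (vs!i) (ks!i) (vs!Suc i)"
  using assms by (auto simp: is_walk_def)

lemma fwd_chain:
  assumes "is_walk H vs ks" "i < length ks" "ks!i = Fwd"
  shows "\<exists>j. i < j \<and> j \<le> length ks \<and> (vs!i, vs!j) \<in> (dir H)\<^sup>+ \<and>
           (j = length ks \<or> (j < length ks \<and> collider ks j))"
  using assms
proof (induction "length ks - i" arbitrary: i rule: less_induct)
  case less
  have e: "(vs!i, vs!Suc i) \<in> dir H"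
    using walk_step[OF less.prems(1,2)] less.prems(3) by (simp add: step_ok_def)
  show ?case
  proof (cases "Suc i = length ks \<or> collider ks (Suc i)")
    case True
    then show ?thesis using e less.prems by (intro exI[of _ "Suc i"]) auto
  next
    case False
    then have s: "Suc i < length ks" using less.prems by auto
    have f: "ks ! Suc i = Fwd" using False less.prems
      by (cases "ks ! Suc i") (auto simp: collider_def arrow_at_end_def arrow_at_start_def)
    have d: "length ks - Suc i < length ks - i" using s by simp
    from less.hyps[of "Suc i", OF d less.prems(1) s f] s
    obtain j where "Suc i < j" "j \<le> length ks" "(vs!Suc i, vs!j) \<in> (dir H)\<^sup>+"
      "j = length ks \<or> (j < length ks \<and> collider ks j)" by auto
    then show ?thesis using e by (intro exI[of _ j]) (auto intro: trancl_into_trancl2)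
  qed
qed

lemma bwd_chain:
  assumes "is_walk H vs ks" "0 < i" "i \<le> length ks" "ks!(i - 1) = Bwd"
  shows "\<exists>j. j < i \<and> (vs!i, vs!j) \<in> (dir H)\<^sup>+ \<and> (j = 0 \<or> (0 < j \<and> collider ks j))"
  using assms
proof (induction i rule: less_induct)
  case (less i)
  then obtain k where k: "i = Suc k" by (cases i) auto
  have e: "(vs!i, vs!k) \<in> dir H"
    using walk_step[OF less.prems(1), of k] less.prems k by (simp add: step_ok_def)
  show ?case
  proof (cases "k = 0 \<or> collider ks k")
    case True
    then show ?thesis using e k by (intro exI[of _ k]) auto
  next
    case False
    then have s: "0 < k" by auto
    have "ks ! (k - 1) = Bwd" using False less.prems k
      by (cases "ks ! (k - 1)") (auto simp: collider_def arrow_at_end_def arrow_at_start_def)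
    from less.IH[of k, OF _ less.prems(1) s _ this] s k less.prems
    obtain j where "j < k" "(vs!k, vs!j) \<in> (dir H)\<^sup>+"
      "j = 0 \<or> (0 < j \<and> collider ks j)" by auto
    then show ?thesis using e k by (intro exI[of _ j]) (auto intro: trancl_into_trancl2)
  qed
qed

lemma nc_anc:
  assumes "is_walk H vs ks" "open_walk vs ks C" "0 < i" "i < length ks" "\<not> collider ks i"
  shows "\<exists>j \<le> length ks. (vs!i, vs!j) \<in> (dir H)\<^sup>+ \<and> (j = 0 \<or> j = length ks \<or> vs!j \<in> C)"
proof -
  have "ks!(i - 1) = Bwd \<or> ks!i = Fwd" using assms(5)
    by (cases "ks!(i-1)"; cases "ks!i") (auto simp: collider_def arrow_at_end_def arrow_at_start_def)
  then show ?thesis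
  proof
    assume "ks!(i - 1) = Bwd"
    from bwd_chain[OF assms(1,3) _ this] assms(4) obtain j where
      "j < i" "(vs!i, vs!j) \<in> (dir H)\<^sup>+" "j = 0 \<or> (0 < j \<and> collider ks j)" by auto
    moreover have "j < length ks" using \<open>j < i\<close> assms(4) by simp
    ultimately show ?thesis using assms(2) unfolding open_walk_def
      by (intro exI[of _ j]) (auto split: if_splits)
  next
    assume "ks!i = Fwd"
    from fwd_chain[OF assms(1,4) this] obtain j where
      "i < j" "j \<le> length ks" "(vs!i, vs!j) \<in> (dir H)\<^sup>+" "j = length ks \<or> (j < length ks \<and> collider ks j)" by auto
    then show ?thesis using assms(2,3) unfolding open_walk_def
      by (intro exI[of _ j]) (auto split: if_splits)
  qed
qed

lemma open_extend:
  assumes "is_walk H vs ks" "open_walk vs ks (C - {w})"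
    "\<And>j. j \<le> length ks \<Longrightarrow> (j = 0 \<or> j = length ks \<or> vs!j \<in> C - {w}) \<Longrightarrow> (w, vs!j) \<notin> (dir H)\<^sup>+"
  shows "open_walk vs ks C"
  unfolding open_walk_def
proof (intro allI impI)
  fix i assume i: "0 < i \<and> i < length ks"
  show "if collider ks i then vs ! i \<in> C else vs ! i \<notin> C"
  proof (cases "collider ks i")
    case True then show ?thesis using assms(2) i unfolding open_walk_def by auto
  next
    case False
    have "vs!i \<notin> C - {w}" using assms(2) i False unfolding open_walk_def by auto
    moreover have "vs!i \<noteq> w"
    proof
      assume "vs!i = w"
      from nc_anc[OF assms(1,2)] i False obtain j where
        "j \<le> length ks" "(vs!i, vs!j) \<in> (dir H)\<^sup>+" "j = 0 \<or> j = length ks \<or> vs!j \<in> C - {w}" by auto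
      with assms(3) \<open>vs!i = w\<close> show False by blast
    qed
    ultimately show ?thesis using False by auto
  qed
qed

lemma walk_drop:
  assumes "is_walk H vs ks" "i \<le> length ks"
  shows "is_walk H (drop i vs) (drop i ks)"
  using assms unfolding is_walk_def
  by (auto simp: Suc_diff_le dest: in_set_dropD)

lemma open_drop:
  assumes "open_walk vs ks C" "length vs = Suc (length ks)"
  shows "open_walk (drop i vs) (drop i ks) C"
  unfolding open_walk_def
proof (intro allI impI)
  fix j assume j: "0 < j \<and> j < length (drop i ks)"
  have c: "collider (drop i ks) j = collider ks (i + j)"
    using j by (auto simp: collider_def nth_drop)
  have "drop i vs ! j = vs ! (i + j)"
  proof -
    have "i \<le> length vs" using j assms(2) by (simp; linarith)
    then show ?thesis by (rule nth_drop)
  qed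
  moreover have "if collider ks (i+j) then vs!(i+j) \<in> C else vs!(i+j) \<notin> C"
    using assms j unfolding open_walk_def by auto
  ultimately show "if collider (drop i ks) j then drop i vs ! j \<in> C else drop i vs ! j \<notin> C"
    using c by simp
qed

lemma walk_take:
  assumes "is_walk H vs ks" "p \<le> length ks"
  shows "is_walk H (take (Suc p) vs) (take p ks)"
  using assms unfolding is_walk_def
  by (auto simp: min_def dest: in_set_takeD)

lemma open_take:
  assumes "open_walk vs ks C"
  shows "open_walk (take (Suc p) vs) (take p ks) C"
  unfolding open_walk_def
proof (intro allI impI)
  fix j assume j: "0 < j \<and> j < length (take p ks)"
  have c: "collider (take p ks) j = collider ks j"
    using j by (auto simp: collider_def)
  moreover have "if collider ks j then vs!j \<in> C else vs!j \<notin> C"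
    using assms j unfolding open_walk_def by auto
  ultimately show "if collider (take p ks) j then take (Suc p) vs ! j \<in> C else take (Suc p) vs ! j \<notin> C"
    using j by simp
qed

lemma app_nth1:
  assumes "length vs1 = Suc n1" "i \<le> n1"
  shows "(vs1 @ tl vs2) ! i = vs1 ! i"
  using assms by (simp add: nth_append)

lemma app_nth2:
  assumes "length vs1 = Suc n1" "last vs1 = hd vs2" "vs2 \<noteq> []" "n1 \<le> i" "i < n1 + length vs2"
  shows "(vs1 @ tl vs2) ! i = vs2 ! (i - n1)"
proof (cases "i = n1")
  case True
  then show ?thesis using assms
    by (metis last_conv_nth hd_conv_nth app_nth1 diff_Suc_1 diff_self_eq_0 le_refl list.size(3) nat.distinct(1))
next
  case False
  then have "(vs1 @ tl vs2) ! i = tl vs2 ! (i - Suc n1)" using assms by (simp add: nth_append)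
  also have "\<dots> = vs2 ! Suc (i - Suc n1)" using assms False by (simp add: nth_tl)
  also have "Suc (i - Suc n1) = i - n1" using assms False by simp
  finally show ?thesis .
qed

lemma walk_append:
  assumes w1: "is_walk H vs1 ks1" and w2: "is_walk H vs2 ks2" and l: "last vs1 = hd vs2"
  shows "is_walk H (vs1 @ tl vs2) (ks1 @ ks2)"
proof -
  let ?n1 = "length ks1"
  have L1: "length vs1 = Suc ?n1" and L2: "length vs2 = Suc (length ks2)"
    using w1 w2 by (auto simp: is_walk_def)
  have ne: "vs2 \<noteq> []" using L2 by auto
  have "set (vs1 @ tl vs2) \<subseteq> nodes H" using w1 w2 by (auto simp: is_walk_def dest!: list.set_sel(2)[rotated])
  moreover have "step_ok H ((vs1 @ tl vs2) ! i) ((ks1 @ ks2) ! i) ((vs1 @ tl vs2) ! Suc i)"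
    if i: "i < length (ks1 @ ks2)" for i
  proof (cases "i < ?n1")
    case True
    then show ?thesis using walk_step[OF w1 True] app_nth1[OF L1, of i vs2] app_nth1[OF L1, of "Suc i" vs2]
      by (simp add: nth_append)
  next
    case False
    then have a: "(vs1 @ tl vs2) ! i = vs2 ! (i - ?n1)" "(vs1 @ tl vs2) ! Suc i = vs2 ! Suc (i - ?n1)"
      using app_nth2[OF L1 l ne, of i] app_nth2[OF L1 l ne, of "Suc i"] i L2 by (auto simp: Suc_diff_le)
    have "i - ?n1 < length ks2" using i False by simp
    from walk_step[OF w2 this] show ?thesis using a False by (simp add: nth_append)
  qed
  ultimately show ?thesis using L1 L2 unfolding is_walk_def by auto
qed

lemma open_append:
  assumes L1: "length vs1 = Suc (length ks1)" and L2: "length vs2 = Suc (length ks2)"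
    and l: "last vs1 = hd vs2"
    and o1: "open_walk vs1 ks1 C" and o2: "open_walk vs2 ks2 C"
    and j: "ks1 \<noteq> [] \<Longrightarrow> ks2 \<noteq> [] \<Longrightarrow>
      (if arrow_at_end (last ks1) \<and> arrow_at_start (hd ks2) then last vs1 \<in> C else last vs1 \<notin> C)"
  shows "open_walk (vs1 @ tl vs2) (ks1 @ ks2) C"
  unfolding open_walk_def
proof (intro allI impI)
  let ?n1 = "length ks1"
  have ne: "vs2 \<noteq> []" using L2 by auto
  fix i assume i: "0 < i \<and> i < length (ks1 @ ks2)"
  consider "i < ?n1" | "i = ?n1" | "?n1 < i" by linarith
  then show "if collider (ks1 @ ks2) i then (vs1 @ tl vs2) ! i \<in> C else (vs1 @ tl vs2) ! i \<notin> C"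
  proof cases
    case 1
    have "collider (ks1 @ ks2) i = collider ks1 i" using 1 i by (auto simp: collider_def nth_append)
    moreover have "(vs1 @ tl vs2) ! i = vs1 ! i" using app_nth1[OF L1, of i] 1 by simp
    ultimately show ?thesis using o1 1 i unfolding open_walk_def by auto
  next
    case 2
    have k1: "ks1 \<noteq> []" and k2: "ks2 \<noteq> []" using 2 i by auto
    have "collider (ks1 @ ks2) i = (arrow_at_end (last ks1) \<and> arrow_at_start (hd ks2))"
      using 2 k1 k2 by (simp add: collider_def nth_append last_conv_nth hd_conv_nth)
    moreover have "(vs1 @ tl vs2) ! i = last vs1" using app_nth1[OF L1, of i vs2] 2 L1
      by (metis last_conv_nth diff_Suc_1 le_refl list.size(3) nat.distinct(1))
    ultimately show ?thesis using j[OF k1 k2] by simp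
  next
    case 3
    have "collider (ks1 @ ks2) i = collider ks2 (i - ?n1)" using 3 i
      by (auto simp: collider_def nth_append)
    moreover have "(vs1 @ tl vs2) ! i = vs2 ! (i - ?n1)" using app_nth2[OF _ l ne, of ?n1 i] 3 i L1 L2 by simp
    moreover have "0 < i - ?n1 \<and> i - ?n1 < length ks2" using 3 i by auto
    ultimately show ?thesis using o2 unfolding open_walk_def by auto
  qed
qed

lemma hd_last_nth:
  assumes "length vs = Suc n"
  shows "vs ! 0 = hd vs" "vs ! n = last vs"
proof -
  have "vs \<noteq> []" using assms by auto
  then show "vs ! 0 = hd vs" "vs ! n = last vs" using assms by (auto simp: hd_conv_nth last_conv_nth)
qed

lemma walk_tilde:
  assumes "is_walk G vs ks" "x \<notin> set vs"
  shows "is_walk (tilde G x y) vs ks"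
  unfolding is_walk_def
proof (intro conjI allI impI)
  show "length vs = Suc (length ks)" "set vs \<subseteq> nodes (tilde G x y)"
    using assms by (auto simp: is_walk_def tilde_def)
  fix i assume i: "i < length ks"
  have L: "length vs = Suc (length ks)" using assms by (simp add: is_walk_def)
  have "vs ! i \<noteq> x" "vs ! Suc i \<noteq> x" using assms(2) i L by (auto dest: nth_mem)
  then show "step_ok (tilde G x y) (vs ! i) (ks ! i) (vs ! Suc i)"
    using walk_step[OF assms(1) i] by (auto simp: step_ok_def tilde_def split: ekind.splits)
qed

lemma last_x:
  assumes "d_connected G {x} B C"
  shows "\<exists>vs ks. is_walk G vs ks \<and> hd vs = x \<and> last vs \<in> B \<and> open_walk vs ks C
     \<and> (\<forall>i. 0 < i \<longrightarrow> i < length vs \<longrightarrow> vs ! i \<noteq> x)"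
proof -
  obtain vs ks where w: "is_walk G vs ks" and h: "hd vs = x" and l: "last vs \<in> B"
    and o: "open_walk vs ks C" using assms by (auto simp: d_connected_def)
  have L: "length vs = Suc (length ks)" using w by (simp add: is_walk_def)
  define I where "I = {i. i < length vs \<and> vs ! i = x}"
  have fI: "finite I" unfolding I_def by simp
  have "0 \<in> I" unfolding I_def using L h hd_last_nth[OF L] by simp
  define m where "m = Max I"
  have mI: "m \<in> I" unfolding m_def using fI \<open>0 \<in> I\<close> by (intro Max_in) auto
  have mx: "\<And>j. j \<in> I \<Longrightarrow> j \<le> m" unfolding m_def using fI by simp
  have ml: "m < length vs" "vs ! m = x" using mI by (auto simp: I_def)
  have "is_walk G (drop m vs) (drop m ks)" using walk_drop[OF w] ml L by simp
  moreover have "hd (drop m vs) = x" using ml by (simp add: hd_drop_conv_nth)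
  moreover have "last (drop m vs) \<in> B" using ml l by simp
  moreover have "open_walk (drop m vs) (drop m ks) C" using open_drop[OF o L] .
  moreover have "\<forall>i. 0 < i \<longrightarrow> i < length (drop m vs) \<longrightarrow> drop m vs ! i \<noteq> x"
  proof (intro allI impI)
    fix i assume "0 < i" "i < length (drop m vs)"
    then have "m + i \<notin> I" "m + i < length vs" using mx by force+
    then show "drop m vs ! i \<noteq> x" using ml by (simp add: I_def nth_drop)
  qed
  ultimately show ?thesis by blast
qed

lemma an_closed:
  assumes "(w, c) \<in> (dir H)\<^sup>+" "c \<in> an H S"
  shows "w \<in> an H S"
  using assms unfolding an_def by (auto dest: trancl_into_rtrancl intro: rtrancl_trans)

lemma open_remove:
  assumes "open_walk vs ks W" "\<And>i. 0 < i \<Longrightarrow> i < length ks \<Longrightarrow> vs ! i \<noteq> w"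
  shows "open_walk vs ks (W - {w})"
  using assms unfolding open_walk_def by auto

lemma step_reduce:
  assumes adm: "is_admg G" and V: "valid_cis G x y {z} W"
    and wW: "w \<in> W" and wA: "w \<notin> an (tilde G x y) {y, z}"
    and wmax: "\<And>c. c \<in> W - {w} \<Longrightarrow> (w, c) \<notin> (dir (tilde G x y))\<^sup>+"
  shows "\<exists>z'. z' \<in> nodes G \<and> valid_cis G x y {z'} (W - {w})"
proof -
  let ?T = "tilde G x y"
  have acyT: "acyclic (dir ?T)" using adm
    by (auto simp: is_admg_def tilde_def intro: acyclic_subset)
  have dis: "x \<notin> W" "y \<notin> W" "z \<notin> W" "x \<noteq> z" "y \<noteq> z" "(W \<union> {z}) \<inter> forb G x y = {}"
    using V by (auto simp: valid_cis_def)
  have sepT: "\<not> d_connected ?T {y} {z} W" using V by (simp add: valid_cis_def d_separated_def)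
  obtain vs ks where w: "is_walk G vs ks" and h: "hd vs = x" and l: "last vs = z"
    and o: "open_walk vs ks W" and nx: "\<forall>i. 0 < i \<longrightarrow> i < length vs \<longrightarrow> vs ! i \<noteq> x"
    using last_x[of G x "{z}" W] V by (auto simp: valid_cis_def)
  have L: "length vs = Suc (length ks)" using w by (simp add: is_walk_def)
  have zn: "z \<in> nodes G" using w l L by (metis is_walk_def last_in_set list.size(3) nat.distinct(1) subsetD)
  show ?thesis
  proof (cases "w \<in> set vs")
    case False
    have "open_walk vs ks (W - {w})" using o False unfolding open_walk_def
      by (metis DiffD1 DiffI L Suc_lessD less_SucI nth_mem singletonD)
    then have c1: "d_connected G {x} {z} (W - {w})" using w h l by (auto simp: d_connected_def)
    have c2: "\<not> d_connected ?T {y} {z} (W - {w})"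
    proof
      assume "d_connected ?T {y} {z} (W - {w})"
      then obtain us ls where u: "is_walk ?T us ls" "hd us = y" "last us = z"
        "open_walk us ls (W - {w})" by (auto simp: d_connected_def)
      have LU: "length us = Suc (length ls)" using u by (simp add: is_walk_def)
      have "open_walk us ls W"
      proof (rule open_extend[OF u(1) u(4)])
        fix j assume j: "j \<le> length ls" "j = 0 \<or> j = length ls \<or> us ! j \<in> W - {w}"
        show "(w, us ! j) \<notin> (dir ?T)\<^sup>+"
        proof
          assume r: "(w, us ! j) \<in> (dir ?T)\<^sup>+"
          consider "j = 0" | "j = length ls" | "us ! j \<in> W - {w}" using j by blast
          then show False
          proof cases
            case 1
            then have "us ! j = y" using u hd_last_nth[OF LU] by simp
            then have "us ! j \<in> an ?T {y, z}" by (auto simp: an_def)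
            then show False using an_closed[OF r] wA by blast
          next
            case 2
            then have "us ! j = z" using u hd_last_nth[OF LU] by simp
            then have "us ! j \<in> an ?T {y, z}" by (auto simp: an_def)
            then show False using an_closed[OF r] wA by blast
          next
            case 3 then show False using wmax r by blast
          qed
        qed
      qed
      then show False using sepT u by (auto simp: d_connected_def)
    qed
    show ?thesis
      using dis V c1 c2 zn by (intro exI[of _ z]) (auto simp: valid_cis_def d_separated_def)
  next
    case True
    define p where "p = (LEAST i. i < length vs \<and> vs ! i = w)"
    have ex: "\<exists>i. i < length vs \<and> vs ! i = w" using True by (simp add: in_set_conv_nth)
    have pp: "p < length vs" "vs ! p = w" using LeastI_ex[OF ex] unfolding p_def by auto
    have pmin: "\<And>i. i < p \<Longrightarrow> vs ! i \<noteq> w"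
      using not_less_Least[of _ "\<lambda>i. i < length vs \<and> vs ! i = w"] pp unfolding p_def[symmetric]
      by (metis order.strict_trans)
    have "p \<noteq> 0" using pp hd_last_nth[OF L] h dis wW by auto
    moreover have "p \<noteq> length ks" using pp hd_last_nth[OF L] l dis wW by auto
    ultimately have p0: "0 < p" and pk: "p < length ks" using pp L by auto
    have col: "collider ks p" using o p0 pk pp wW unfolding open_walk_def by (metis)
    have wn: "w \<in> nodes G" using w pp by (auto simp: is_walk_def dest: nth_mem)
    have Lp: "length (take (Suc p) vs) = Suc p" using pp by simp
    have c1: "d_connected G {x} {w} (W - {w})"
      unfolding d_connected_def
    proof (intro exI conjI)
      show "is_walk G (take (Suc p) vs) (take p ks)" using walk_take[OF w] pk by simp
      show "hd (take (Suc p) vs) \<in> {x}" using h pp by (cases vs) auto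
      show "last (take (Suc p) vs) \<in> {w}" using hd_last_nth(2)[OF Lp] pp by simp
      show "open_walk (take (Suc p) vs) (take p ks) (W - {w})"
        using open_remove[OF open_take[OF o]] pmin by simp
    qed
    have c2: "\<not> d_connected ?T {y} {w} (W - {w})"
    proof
      assume "d_connected ?T {y} {w} (W - {w})"
      then obtain us ls where u: "is_walk ?T us ls" "hd us = y" "last us = w"
        "open_walk us ls (W - {w})" by (auto simp: d_connected_def)
      have LU: "length us = Suc (length ls)" using u by (simp add: is_walk_def)
      have yA: "\<not> (w, y) \<in> (dir ?T)\<^sup>+"
        using an_closed[of w y ?T "{y,z}"] wA by (auto simp: an_def)
      have ww: "(w, w) \<notin> (dir ?T)\<^sup>+" using acyT by (simp add: acyclic_def)
      have uo: "open_walk us ls W"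
      proof (rule open_extend[OF u(1) u(4)])
        fix j assume j: "j \<le> length ls" "j = 0 \<or> j = length ls \<or> us ! j \<in> W - {w}"
        show "(w, us ! j) \<notin> (dir ?T)\<^sup>+"
          using j hd_last_nth[OF LU] u yA ww wmax by auto
      qed
      have lne: "ls \<noteq> []" using LU u dis wW by (cases us) auto
      have ae: "arrow_at_end (last ls)"
      proof (rule ccontr)
        assume "\<not> arrow_at_end (last ls)"
        then have "ls ! (length ls - 1) = Bwd" using lne
          by (cases "last ls") (auto simp: arrow_at_end_def last_conv_nth)
        from bwd_chain[OF u(1) _ _ this] lne obtain j where
          j: "j < length ls" "(us ! length ls, us ! j) \<in> (dir ?T)\<^sup>+" "j = 0 \<or> (0 < j \<and> collider ls j)"
          by auto
        have "us ! length ls = w" using hd_last_nth[OF LU] u by simp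
        moreover have "j = 0 \<longrightarrow> us ! j = y" using hd_last_nth[OF LU] u by simp
        moreover have "0 < j \<and> collider ls j \<longrightarrow> us ! j \<in> W - {w}"
          using u(4) j(1) unfolding open_walk_def by auto
        ultimately show False using j yA wmax by auto
      qed
      let ?vs = "drop p vs" and ?ks = "drop p ks"
      have Ls: "length ?vs = Suc (length ?ks)" using L pk by simp
      have xs: "x \<notin> set ?vs"
      proof
        assume "x \<in> set ?vs"
        then obtain i where "i < length ?vs" "?vs ! i = x" by (auto simp: in_set_conv_nth)
        then show False using nx p0 pp by (auto simp: nth_drop)
      qed
      have sw: "is_walk ?T ?vs ?ks" using walk_tilde[OF walk_drop[OF w] xs] pk by simp
      have so: "open_walk ?vs ?ks W" using open_drop[OF o L] .
      have sh: "hd ?vs = w" using pp by (simp add: hd_drop_conv_nth)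
      have kne: "?ks \<noteq> []" using pk by simp
      have as: "arrow_at_start (hd ?ks)" using col pk by (simp add: collider_def hd_drop_conv_nth)
      have lw: "last us = hd ?vs" using u sh by simp
      have cw: "is_walk ?T (us @ tl ?vs) (ls @ ?ks)" using walk_append[OF u(1) sw lw] .
      have co: "open_walk (us @ tl ?vs) (ls @ ?ks) W"
        using open_append[OF LU Ls lw uo so] ae as u(3) wW by simp
      have "hd (us @ tl ?vs) = y" using u LU by (cases us) auto
      moreover have "last (us @ tl ?vs) = z"
      proof -
        have "tl ?vs \<noteq> []" using Ls kne by (cases ?vs) auto
        then have "last (us @ tl ?vs) = last ?vs" by (simp add: last_tl)
        also have "\<dots> = z" using l pp by simp
        finally show ?thesis .
      qed
      ultimately have "d_connected ?T {y} {z} W" using cw co by (auto simp: d_connected_def)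
      then show False using sepT by simp
    qed
    show ?thesis
      using dis V c1 c2 wn wW by (intro exI[of _ w]) (auto simp: valid_cis_def d_separated_def)
  qed
qed

lemma main_fwd:
  assumes adm: "is_admg G"
  shows "valid_cis G x y {z} W \<Longrightarrow> W \<subseteq> nodes G \<Longrightarrow> z \<in> nodes G \<Longrightarrow>
    \<exists>z' W'. z' \<in> nodes G \<and> W' \<subseteq> nodes G \<and> W' \<subseteq> an (tilde G x y) {y, z'} \<and> valid_cis G x y {z'} W'"
proof (induction "card W" arbitrary: z W rule: less_induct)
  case less
  let ?T = "tilde G x y"
  show ?case
  proof (cases "W \<subseteq> an ?T {y, z}")
    case True
    then show ?thesis using less.prems by blast
  next
    case False
    let ?S = "W - an ?T {y, z}"
    have fin: "finite (dir ?T)" using adm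
      by (auto simp: is_admg_def tilde_def intro: finite_subset[of _ "nodes G \<times> nodes G"])
    have acyT: "acyclic (dir ?T)" using adm
      by (auto simp: is_admg_def tilde_def intro: acyclic_subset)
    have wf: "wf (((dir ?T)\<^sup>+)\<inverse>)"
      using wf_trancl[OF finite_acyclic_wf_converse[OF fin acyT]] by (simp add: trancl_converse)
    obtain v where v: "v \<in> ?S" using False by blast
    obtain w where wS: "w \<in> ?S" and wm: "\<And>c. (c, w) \<in> ((dir ?T)\<^sup>+)\<inverse> \<Longrightarrow> c \<notin> ?S"
      using wfE_min[OF wf v] by blast
    have wmax: "\<And>c. c \<in> W - {w} \<Longrightarrow> (w, c) \<notin> (dir ?T)\<^sup>+"
    proof
      fix c assume c: "c \<in> W - {w}" and r: "(w, c) \<in> (dir ?T)\<^sup>+"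
      show False
      proof (cases "c \<in> an ?T {y, z}")
        case True then show False using an_closed[OF r] wS by blast
      next
        case False then show False using wm[of c] r c by auto
      qed
    qed
    from step_reduce[OF adm less.prems(1), of w] wS wmax
    obtain z' where z': "z' \<in> nodes G" "valid_cis G x y {z'} (W - {w})" by blast
    have finW: "finite W" using less.prems(2) adm by (auto simp: is_admg_def intro: finite_subset)
    have "card (W - {w}) < card W" using finW wS by (metis DiffD1 card_Diff1_less)
    from less.hyps[OF this z'(2) _ z'(1)] less.prems(2) show ?thesis by blast
  qed
qed

theorem mainTheorem7:
  fixes G :: "'v admg" and x y :: 'v
  assumes "is_admg G" and "x \<in> nodes G" and "y \<in> nodes G" and "x \<noteq> y"
  shows "(\<exists>z W. z \<in> nodes G \<and> W \<subseteq> nodes G \<and> valid_cis G x y {z} W)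
     \<longleftrightarrow> (\<exists>z' W'. z' \<in> nodes G \<and> W' \<subseteq> nodes G \<and> W' \<subseteq> an (tilde G x y) {y, z'}
            \<and> valid_cis G x y {z'} W')"
  using main_fwd[OF assms(1)] by blast

end
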